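(* Let $h=0$, let $f$ satisfy Assumption A2(i), assume $a_{ij}\neq0$ for every pair $i\ne j$, and let $f^*=\inf\{f(x):a^Tx=b\}>-\infty$. Let $(p_{ij})$ be any probability distribution on ordered pairs with $p_{ij}=p_{ji}>0$ for $i\neq j$ and $p_{ii}=0$, and let $x^k$ be generated by Algorithm (2-RCD) with $h=0$ and pairs drawn i.i.d. according to $p_{ij}$. Let $Q=\sum_{i\ne j}\frac{p_{ij}}{L_{ij}}Q_{ij}$ and let $\nu_2(Q)$ be the second smallest eigenvalue of $Q$, assumed positive. Then for all $k\ge0$, $$\min_{0\le l\le k}E\left[\left(M_3(x^l,\mathbf 1)\right)^2\right]\le\frac{2\,(f(x^0)-f^* )}{\nu_2(Q)\,(k+1)}.$$
   Context: Block structure: $n=\sum_{i=1}^N n_i$ with $N\ge2$, $I_n=[U_1\ \dots\ U_N]$, $\nabla_if(x)=U_i^T\nabla f(x)$, $a_i=U_i^Ta$, $a_{ij}=[a_i^T\ a_j^T]^T$, $\nabla_{ij}f(x)=[\nabla_if(x)^T\ \nabla_jf(x)^T]^T$, $U_{ij}=[U_i\ U_j]\in\mathbb{R}^{n\times(n_i+n_j)}$. Problem: $\min\{f(x): a^Tx=b\}$ with $a\in\mathbb{R}^n$ nonzero. Assumption A2(i): $f$ is differentiable and there are constants $L_{ij}=L_{ji}>0$ with $\|\nabla_{ij}f(x+U_is_i+U_js_j)-\nabla_{ij}f(x)\|\le L_{ij}\|[s_i^T\ s_j^T]^T\|$ for all $s_i,s_j$, $x$. Algorithm (2-RCD) with $h=0$: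 given $x^0$ with $a^Tx^0=b$, for $k\ge0$ choose a random pair $(i,j)=(i_k,j_k)$, $i\ne j$, and set $x^{k+1}=x^k+U_{ij}d_{ij}$ where $d_{ij}=\arg\min\{\langle\nabla_{ij}f(x^k),s\rangle+\frac{L_{ij}}2\|s\|^2: a_{ij}^Ts=0\}=-\frac1{L_{ij}}\big(I-\frac{a_{ij}a_{ij}^T}{a_{ij}^Ta_{ij}}\big)\nabla_{ij}f(x^k)$. $Q_{ij}=U_{ij}\big(I_{n_i+n_j}-\frac{a_{ij}a_{ij}^T}{a_{ij}^Ta_{ij}}\big)U_{ij}^T\in\mathbb{R}^{n\times n}$ (symmetric positive semidefinite, $Q_{ij}a=0$). For feasible $x$, $\nabla f(x)_\perp$ denotes the orthogonal projection of $\nabla f(x)$ onto $S=\{s:a^Ts=0\}$, and $M_3(x,\mathbf 1)=\|\nabla f(x)_\perp\|$ (Euclidean norm). *)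

theory Defs
  imports "HOL-Analysis.Analysis" "HOL-Probability.Probability"
          "HOL-Computational_Algebra.Polynomial"
begin

text \<open>Coordinates are indexed by the finite type 'n, blocks by the finite type 'b;
  blk k is the block containing coordinate k.  For a set S of blocks,
  bmask blk S v = (sum over i in S of U_i U_i^T) v keeps the block components of v in S.\<close>

definition bmask :: "('n::finite \<Rightarrow> 'b) \<Rightarrow> 'b set \<Rightarrow> real^'n \<Rightarrow> real^'n" where
  "bmask blk S v = (\<chi> k. if blk k \<in> S then v $ k else 0)"

text \<open>U_ij d_ij embedded in R^n (closed form of d_ij given in the paper):
  -(1/L_ij)(I - a_ij a_ij^T/(a_ij^T a_ij)) grad_ij f(x).\<close>

definition rcd_step :: "('n::finite \<Rightarrow> 'b) \<Rightarrow> real^'n \<Rightarrow> ('b \<Rightarrow> 'b \<Rightarrow> real)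
    \<Rightarrow> (real^'n \<Rightarrow> real^'n) \<Rightarrow> 'b \<times> 'b \<Rightarrow> real^'n \<Rightarrow> real^'n" where
  "rcd_step blk a L gradf ij x =
     (let i = fst ij; j = snd ij;
          g = bmask blk {i, j} (gradf x);
          aa = bmask blk {i, j} a
      in x - (1 / L i j) *\<^sub>R (g - ((aa \<bullet> g) / (aa \<bullet> aa)) *\<^sub>R aa))"

fun rcd_iter :: "('n::finite \<Rightarrow> 'b) \<Rightarrow> real^'n \<Rightarrow> ('b \<Rightarrow> 'b \<Rightarrow> real)
    \<Rightarrow> (real^'n \<Rightarrow> real^'n) \<Rightarrow> real^'n \<Rightarrow> (nat \<Rightarrow> 'b \<times> 'b) \<Rightarrow> nat \<Rightarrow> real^'n" where
  "rcd_iter blk a L gradf x0 \<omega> 0 = x0"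
| "rcd_iter blk a L gradf x0 \<omega> (Suc k) =
     rcd_step blk a L gradf (\<omega> k) (rcd_iter blk a L gradf x0 \<omega> k)"

definition proj_perp :: "real^'n::finite \<Rightarrow> real^'n \<Rightarrow> real^'n" where
  "proj_perp a g = g - ((a \<bullet> g) / (a \<bullet> a)) *\<^sub>R a"

definition M3 :: "real^'n::finite \<Rightarrow> (real^'n \<Rightarrow> real^'n) \<Rightarrow> real^'n \<Rightarrow> real" where
  "M3 a gradf x = norm (proj_perp a (gradf x))"

text \<open>Q_ij = U_ij (I - a_ij a_ij^T / (a_ij^T a_ij)) U_ij^T as an n x n matrix.\<close>

definition Qij :: "('n::finite \<Rightarrow> 'b) \<Rightarrow> real^'n \<Rightarrow> 'b \<Rightarrow> 'b \<Rightarrow> real^'n^'n" where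
  "Qij blk a i j =
     (let aa = bmask blk {i, j} a
      in \<chi> k l. (if k = l \<and> blk k \<in> {i, j} then 1 else 0) - aa $ k * aa $ l / (aa \<bullet> aa))"

text \<open>Characteristic polynomial det(X I - A); eigenvalues (with multiplicity) are its
  roots; nu2 A is the second smallest eigenvalue.\<close>

definition charpoly :: "real^'n::finite^'n \<Rightarrow> real poly" where
  "charpoly A = det (\<chi> i j. if i = j then [:- (A $ i $ j), 1:] else [:- (A $ i $ j):])"

definition nu2 :: "real^'n::finite^'n \<Rightarrow> real" where
  "nu2 A = sorted_list_of_multiset (proots (charpoly A)) ! 1"

end

theory Submission
  imports Defs
begin

lemma bmask_nth [simp]: "bmask blk S v $ k = (if blk k \<in> S then v $ k else 0)"
  by (simp add: bmask_def)

lemma bmask_add: "bmask blk S (u + v) = bmask blk S u + bmask blk S v"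
  by (simp add: vec_eq_iff)
lemma bmask_diff: "bmask blk S (u - v) = bmask blk S u - bmask blk S v"
  by (simp add: vec_eq_iff)
lemma bmask_scaleR: "bmask blk S (c *\<^sub>R v) = c *\<^sub>R bmask blk S v"
  by (simp add: vec_eq_iff)
lemma bmask_zero [simp]: "bmask blk S 0 = 0"
  by (simp add: vec_eq_iff)
lemma bmask_idem [simp]: "bmask blk S (bmask blk S v) = bmask blk S v"
  by (simp add: vec_eq_iff)

lemma inner_bmask_left: "bmask blk S u \<bullet> v = u \<bullet> bmask blk S v"
  by (auto simp: inner_vec_def intro!: sum.cong)

lemma inner_bmask_both: "bmask blk S u \<bullet> bmask blk S v = u \<bullet> bmask blk S v"
  by (auto simp: inner_vec_def intro!: sum.cong)

definition qv :: "('n::finite \<Rightarrow> 'b) \<Rightarrow> real^'n \<Rightarrow> 'b set \<Rightarrow> real^'n \<Rightarrow> real^'n" where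
  "qv blk a S v = bmask blk S v - ((bmask blk S a \<bullet> v) / (bmask blk S a \<bullet> bmask blk S a)) *\<^sub>R bmask blk S a"

lemma Qij_mult: "Qij blk a i j *v v = qv blk a {i,j} v"
proof -
  define aa where "aa = bmask blk {i,j} a"
  define D where "D = aa \<bullet> aa"
  have "(Qij blk a i j *v v) $ k = qv blk a {i,j} v $ k" for k
  proof -
    have "(Qij blk a i j *v v) $ k
        = (\<Sum>l\<in>UNIV. ((if k = l \<and> blk k \<in> {i,j} then 1 else 0) - aa $ k * aa $ l / D) * v $ l)"
      by (simp add: matrix_vector_mult_def Qij_def Let_def aa_def D_def)
    also have "\<dots> = (\<Sum>l\<in>UNIV. (if k = l then (if blk k \<in> {i,j} then v $ l else 0) else 0))
                   - aa $ k / D * (\<Sum>l\<in>UNIV. aa $ l * v $ l)"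
      proof -
      have "(\<Sum>l\<in>UNIV. ((if k = l \<and> blk k \<in> {i,j} then 1 else 0) - aa $ k * aa $ l / D) * v $ l)
        = (\<Sum>l\<in>UNIV. (if k = l then (if blk k \<in> {i,j} then v $ l else 0) else 0) - aa $ k / D * (aa $ l * v $ l))"
        by (rule sum.cong) (simp_all add: left_diff_distrib)
      then show ?thesis by (simp add: sum_subtractf sum_distrib_left)
    qed
    also have "\<dots> = (if blk k \<in> {i,j} then v $ k else 0) - aa $ k / D * (aa \<bullet> v)"
      by (simp add: inner_vec_def)
    also have "\<dots> = qv blk a {i,j} v $ k"
      by (simp add: qv_def aa_def D_def)
    finally show ?thesis .
  qed
  then show ?thesis by (simp add: vec_eq_iff)
qed

lemma qv_inner: "w \<bullet> qv blk a S v = bmask blk S w \<bullet> bmask blk S v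
     - (bmask blk S a \<bullet> w) * (bmask blk S a \<bullet> v) / (bmask blk S a \<bullet> bmask blk S a)"
proof -
  have 1: "w \<bullet> bmask blk S v = bmask blk S w \<bullet> bmask blk S v" by (simp add: inner_bmask_both)
  have 2: "w \<bullet> bmask blk S a = bmask blk S a \<bullet> w" by (rule inner_commute)
  show ?thesis unfolding qv_def inner_diff_right inner_scaleR_right 1 2 by simp
qed

lemma qv_sym: "w \<bullet> qv blk a S v = v \<bullet> qv blk a S w"
  by (simp add: qv_inner inner_commute)

lemma bm_aa: "bmask blk S a \<bullet> a = bmask blk S a \<bullet> bmask blk S a"
  by (metis inner_bmask_both inner_commute)

lemma bm_av: "bmask blk S a \<bullet> bmask blk S v = bmask blk S a \<bullet> v"
  by (metis inner_bmask_both inner_bmask_left)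

lemma qv_a: "a \<bullet> qv blk a S v = 0"
proof (cases "bmask blk S a = 0")
  case True
  have "a \<bullet> bmask blk S v = bmask blk S a \<bullet> v" by (rule inner_bmask_left[symmetric])
  also have "\<dots> = 0" using True by simp
  finally show ?thesis by (simp add: qv_def True)
next
  case False
  then have "bmask blk S a \<bullet> bmask blk S a \<noteq> 0" by simp
  moreover have "a \<bullet> bmask blk S v = bmask blk S a \<bullet> v" by (rule inner_bmask_left[symmetric])
  ultimately show ?thesis unfolding qv_def inner_diff_right inner_scaleR_right inner_commute[of a "bmask blk S a"] bm_aa
    by simp
qed

lemma qv_of_a: "qv blk a S a = 0"
proof (cases "bmask blk S a = 0")
  case True then show ?thesis by (simp add: qv_def)
next
  case False
  then have "bmask blk S a \<bullet> bmask blk S a \<noteq> 0" by simp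
  then show ?thesis unfolding qv_def bm_aa by simp
qed

lemma qv_quad: "v \<bullet> qv blk a S v = qv blk a S v \<bullet> qv blk a S v"
proof -
  define aa where "aa = bmask blk S a"
  define c where "c = aa \<bullet> v"
  define D where "D = aa \<bullet> aa"
  have av: "aa \<bullet> bmask blk S v = c" unfolding c_def aa_def by (rule bm_av)
  have 1: "v \<bullet> qv blk a S v = bmask blk S v \<bullet> bmask blk S v - c * c / D"
    by (simp add: qv_inner aa_def[symmetric] c_def D_def)
  define k where "k = c / D"
  define bv where "bv = bmask blk S v"
  have va: "bv \<bullet> aa = c" using av inner_commute unfolding bv_def by metis
  have e: "(bv - k *\<^sub>R aa) \<bullet> (bv - k *\<^sub>R aa) = bv \<bullet> bv - k * (bv \<bullet> aa) - k * (aa \<bullet> bv) + k * k * (aa \<bullet> aa)"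
    by (simp add: inner_diff_left inner_diff_right algebra_simps)
  have 2: "qv blk a S v \<bullet> qv blk a S v = bmask blk S v \<bullet> bmask blk S v - 2 * (c / D) * c + (c/D)*(c/D) * D"
    unfolding qv_def aa_def[symmetric] c_def[symmetric] D_def[symmetric] k_def[symmetric] bv_def[symmetric] e
    using va av unfolding bv_def[symmetric] D_def[symmetric] k_def by simp
  show ?thesis
  proof (cases "D = 0")
    case True then show ?thesis using 1 2 by simp
  next
    case False
    have "2 * (c / D) * c - (c/D)*(c/D) * D = c * c / D" using False by (simp add: field_simps)
    then show ?thesis using 1 2 by linarith
  qed
qed

lemma qv_nonneg: "v \<bullet> qv blk a S v \<ge> 0"
  by (simp add: qv_quad)

lemma qv_zero_imp: assumes "v \<bullet> qv blk a S v = 0" shows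
   "bmask blk S v = ((bmask blk S a \<bullet> v) / (bmask blk S a \<bullet> bmask blk S a)) *\<^sub>R bmask blk S a"
proof -
  have "qv blk a S v = 0" using assms qv_quad[of v blk a S] by simp
  then show ?thesis unfolding qv_def by simp
qed

lemma sum_matrix_vector: "finite A \<Longrightarrow> (sum F A) *v v = (\<Sum>x\<in>A. F x *v v)"
  by (induction A rule: finite_induct) (simp_all add: matrix_vector_mult_add_rdistrib)

lemma Q_mult:
  fixes w :: "'b \<Rightarrow> 'b \<Rightarrow> real" and A :: "('b \<times> 'b) set"
  assumes "finite A"
  shows "(\<Sum>(i, j)\<in>A. w i j *\<^sub>R Qij blk a i j) *v v = (\<Sum>(i, j)\<in>A. w i j *\<^sub>R qv blk a {i,j} v)"
  using assms by (simp add: sum_matrix_vector case_prod_beta scaleR_matrix_vector_assoc[symmetric] Qij_mult)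

lemma quad_zero:
  fixes b K :: real
  assumes "\<And>t. 0 \<le> 2 * t * b + t * t * K" "0 \<le> b"
  shows "b = 0"
proof (rule ccontr)
  assume "b \<noteq> 0"
  define m where "m = \<bar>K\<bar> + 1"
  have m: "m > 0" by (simp add: m_def)
  define t where "t = - b / m"
  have "t * t * K \<le> t * t * m" by (intro mult_left_mono) (auto simp: m_def)
  also have "t * t * m = b * b / m" using m by (simp add: t_def field_simps)
  finally have 1: "t * t * K \<le> b * b / m" .
  have 2: "2 * t * b = - 2 * (b * b / m)" by (simp add: t_def)
  have bb: "b * b > 0" using \<open>b \<noteq> 0\<close> not_real_square_gt_zero by blast
  have "0 \<le> - (b * b / m)" using assms(1)[of t] 1 2 by linarith
  moreover have "b * b / m > 0" using bb m by simp
  ultimately show False by linarith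
qed

lemma shift_mult:
  fixes A :: "real^'n^'n"
  shows "(\<chi> i j. (if i = j then x else 0) - A $ i $ j) *v v = x *\<^sub>R v - A *v v"
proof -
  have "((\<chi> i j. (if i = j then x else 0) - A $ i $ j) *v v) $ k = (x *\<^sub>R v - A *v v) $ k" for k
  proof -
    have "((\<chi> i j. (if i = j then x else 0) - A $ i $ j) *v v) $ k
        = (\<Sum>l\<in>UNIV. (if k = l then x * v $ l else 0) - A $ k $ l * v $ l)"
      by (auto simp: matrix_vector_mult_def left_diff_distrib intro!: sum.cong)
    also have "\<dots> = x * v $ k - (\<Sum>l\<in>UNIV. A $ k $ l * v $ l)"
      by (simp add: sum_subtractf)
    finally show ?thesis by (simp add: matrix_vector_mult_def)
  qed
  then show ?thesis by (simp add: vec_eq_iff)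
qed

lemma det_zero_kernel:
  fixes A :: "real^'n^'n"
  assumes "A *v v = 0" "v \<noteq> 0"
  shows "det A = 0"
  using assms invertible_det_nz invertible_left_inverse matrix_left_invertible_ker by metis

lemma det_nz_kernel:
  fixes A :: "real^'n^'n"
  assumes "\<And>v. A *v v = 0 \<Longrightarrow> v = 0"
  shows "det A \<noteq> 0"
  using assms invertible_det_nz invertible_left_inverse matrix_left_invertible_ker by metis

lemma charpoly_eval:
  fixes A :: "real^'n::finite^'n"
  shows "poly (charpoly A) x = det (\<chi> i j. (if i = j then x else 0) - A $ i $ j)"
  unfolding charpoly_def det_def
  by (auto simp: poly_sum poly_prod intro!: sum.cong prod.cong)

lemma sorted_second:
  fixes xs :: "real list"
  assumes "sorted xs" "x \<in> set xs" "y \<in> set xs" "x \<noteq> y" "x \<le> m" "y \<le> m"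
  shows "xs ! 1 \<le> m"
proof -
  obtain i where i: "i < length xs" "xs ! i = x" using assms(2) by (auto simp: in_set_conv_nth)
  obtain j where j: "j < length xs" "xs ! j = y" using assms(3) by (auto simp: in_set_conv_nth)
  have "i \<noteq> j" using i j assms(4) by auto
  define k where "k = max i j"
  have k: "1 \<le> k" "k < length xs" using \<open>i \<noteq> j\<close> i j by (auto simp: k_def)
  have "xs ! 1 \<le> xs ! k" by (rule sorted_nth_mono[OF assms(1) k])
  also have "xs ! k \<le> m" using i j assms by (auto simp: k_def max_def)
  finally show ?thesis .
qed

lemma spectral_bound:
  fixes Q :: "real^'n::finite^'n" and a :: "real^'n"
  assumes sym: "\<And>u v. u \<bullet> (Q *v v) = v \<bullet> (Q *v u)"
    and psd: "\<And>v. v \<bullet> (Q *v v) \<ge> 0"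
    and Qa: "Q *v a = 0" and anz: "a \<noteq> 0"
    and pd: "\<And>v. a \<bullet> v = 0 \<Longrightarrow> v \<bullet> (Q *v v) = 0 \<Longrightarrow> v = 0"
    and ex: "a \<bullet> e = 0" "e \<noteq> 0"
    and perp: "a \<bullet> v = 0"
  shows "nu2 Q * (v \<bullet> v) \<le> v \<bullet> (Q *v v)"
proof -
  define C where "C = sphere (0::real^'n) 1 \<inter> {v. a \<bullet> v = 0}"
  have Ccomp: "compact C" unfolding C_def by (intro compact_Int_closed closed_hyperplane) simp
  have "e /\<^sub>R norm e \<in> C" using ex by (simp add: C_def)
  then have Cne: "C \<noteq> {}" by blast
  have cont: "continuous_on C (\<lambda>v. v \<bullet> (Q *v v))"
    by (intro continuous_intros linear_continuous_on) (auto simp: linear_conv_bounded_linear[symmetric])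
  obtain v0 where v0: "v0 \<in> C" "\<And>u. u \<in> C \<Longrightarrow> v0 \<bullet> (Q *v v0) \<le> u \<bullet> (Q *v u)"
    using continuous_attains_inf[OF Ccomp Cne cont] by blast
  define \<mu> where "\<mu> = v0 \<bullet> (Q *v v0)"
  have v0n: "norm v0 = 1" "a \<bullet> v0 = 0" using v0(1) by (auto simp: C_def)
  have v0v0: "v0 \<bullet> v0 = 1" using v0n by (simp add: norm_eq_1)
  have bound: "\<mu> * (u \<bullet> u) \<le> u \<bullet> (Q *v u)" if "a \<bullet> u = 0" for u
  proof (cases "u = 0")
    case True then show ?thesis by simp
  next
    case False
    define n where "n = norm u"
    have n: "n > 0" using False by (simp add: n_def)
    define u' where "u' = (1/n) *\<^sub>R u"
    have "u' \<in> C" using that n by (simp add: C_def n_def u'_def inner_scaleR_right)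
    then have "\<mu> \<le> u' \<bullet> (Q *v u')" unfolding \<mu>_def by (rule v0(2))
    also have "Q *v u' = (1/n) *\<^sub>R (Q *v u)" unfolding u'_def by (rule matrix_vector_mult_scaleR)
    also have "u' \<bullet> ((1/n) *\<^sub>R (Q *v u)) = (u \<bullet> (Q *v u)) / (n * n)"
      unfolding u'_def inner_scaleR_left inner_scaleR_right by simp
    finally have "\<mu> * (n * n) \<le> u \<bullet> (Q *v u)" using n by (simp add: field_simps)
    moreover have "u \<bullet> u = n * n" by (simp add: n_def dot_square_norm power2_eq_square)
    ultimately show ?thesis by simp
  qed
  define r where "r = Q *v v0 - \<mu> *\<^sub>R v0"
  have ar: "a \<bullet> r = 0"
    using sym[of a v0] Qa v0n by (simp add: r_def inner_diff_right)
  have rv: "r \<bullet> (Q *v v0) - \<mu> * (r \<bullet> v0) = r \<bullet> r"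
    by (simp add: r_def inner_diff_right)
  have "0 \<le> 2 * t * (r \<bullet> r) + t * t * (r \<bullet> (Q *v r) - \<mu> * (r \<bullet> r))" for t
  proof -
    define w where "w = v0 + t *\<^sub>R r"
    have "a \<bullet> w = 0" using ar v0n by (simp add: w_def inner_add_right)
    then have b: "\<mu> * (w \<bullet> w) \<le> w \<bullet> (Q *v w)" by (rule bound)
    have e1: "w \<bullet> (Q *v w) = \<mu> + 2 * t * (r \<bullet> (Q *v v0)) + t * t * (r \<bullet> (Q *v r))"
      using sym[of v0 r]
      by (simp add: w_def matrix_vector_right_distrib matrix_vector_mult_scaleR inner_add_left
          inner_add_right \<mu>_def algebra_simps)
    have e2: "w \<bullet> w = 1 + 2 * t * (r \<bullet> v0) + t * t * (r \<bullet> r)"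
      using v0v0 by (simp add: w_def inner_add_left inner_add_right inner_commute algebra_simps)
    have "0 \<le> w \<bullet> (Q *v w) - \<mu> * (w \<bullet> w)" using b by simp
    also have "\<dots> = 2 * t * (r \<bullet> (Q *v v0) - \<mu> * (r \<bullet> v0)) + t * t * (r \<bullet> (Q *v r) - \<mu> * (r \<bullet> r))"
      unfolding e1 e2 by (simp add: algebra_simps)
    finally show ?thesis unfolding rv .
  qed
  then have "r \<bullet> r = 0" by (intro quad_zero) auto
  then have Qv0: "Q *v v0 = \<mu> *\<^sub>R v0" by (simp add: r_def)
  have mu_pos: "\<mu> > 0"
  proof -
    have "\<mu> \<ge> 0" using psd by (simp add: \<mu>_def)
    moreover have "\<mu> \<noteq> 0"
    proof
      assume "\<mu> = 0"
      then have "v0 = 0" using pd[OF v0n(2)] by (simp add: \<mu>_def)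
      then show False using v0n by simp
    qed
    ultimately show ?thesis by simp
  qed
  define cp where "cp = charpoly Q"
  have cp_eval: "poly cp x = det (\<chi> i j. (if i = j then x else 0) - Q $ i $ j)" for x
    unfolding cp_def by (rule charpoly_eval)
  have cp_nz: "cp \<noteq> 0"
  proof
    assume "cp = 0"
    then have "poly cp (-1) = 0" by simp
    moreover have "det (\<chi> i j. (if i = j then -1 else 0) - Q $ i $ j) \<noteq> 0"
    proof (rule det_nz_kernel)
      fix u assume "(\<chi> i j. (if i = j then -1 else 0) - Q $ i $ j) *v u = 0"
      then have "Q *v u = - u" unfolding shift_mult by (simp add: algebra_simps)
      then have "u \<bullet> (Q *v u) = - (u \<bullet> u)" by simp
      then have "u \<bullet> u \<le> 0" using psd[of u] by linarith
      then show "u = 0" by (metis inner_eq_zero_iff inner_ge_zero order_antisym)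
    qed
    ultimately show False using cp_eval by simp
  qed
  have r0: "poly cp 0 = 0"
  proof -
    have "(\<chi> i j. (if i = j then (0::real) else 0) - Q $ i $ j) *v a = 0"
      unfolding shift_mult using Qa by simp
    then show ?thesis unfolding cp_eval using anz by (rule det_zero_kernel)
  qed
  have rmu: "poly cp \<mu> = 0"
  proof -
    have "v0 \<noteq> 0" using v0n by auto
    then show ?thesis
      unfolding cp_eval by (intro det_zero_kernel[of _ v0]) (simp_all add: shift_mult Qv0)
  qed
  have "nu2 Q \<le> \<mu>"
    unfolding nu2_def cp_def[symmetric]
    by (rule sorted_second[of _ 0 \<mu>]) (use cp_nz r0 rmu mu_pos in auto)
  moreover have "\<mu> * (v \<bullet> v) \<le> v \<bullet> (Q *v v)" by (rule bound[OF perp])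
  moreover have "v \<bullet> v \<ge> 0" by simp
  ultimately show ?thesis by (meson mult_right_mono order_trans)
qed

lemma bmask_uminus [simp]: "bmask blk S (- v) = - bmask blk S v"
  by (simp add: vec_eq_iff)

lemma descent:
  fixes f :: "real^'n::finite \<Rightarrow> real"
  assumes grad: "\<And>x. GDERIV f x :> gradf x"
    and A2: "\<And>s. norm (bmask blk S (gradf (x + bmask blk S s) - gradf x)) \<le> L * norm (bmask blk S s)"
    and sS: "bmask blk S s = s"
  shows "f (x + s) \<le> f x + gradf x \<bullet> s + L / 2 * (s \<bullet> s)"
proof -
  define g where "g = gradf x"
  define \<psi> where "\<psi> t = f (x + t *\<^sub>R s) - (t * (g \<bullet> s) + L / 2 * (t * t) * (s \<bullet> s))" for t
  have dphi: "((\<lambda>t. f (x + t *\<^sub>R s)) has_real_derivative (gradf (x + t *\<^sub>R s) \<bullet> s)) (at t)" for t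
  proof -
    have 1: "((\<lambda>t. x + t *\<^sub>R s) has_derivative (\<lambda>h. h *\<^sub>R s)) (at t)"
      by (auto intro!: derivative_eq_intros)
    have 2: "(f has_derivative (\<lambda>h. h \<bullet> gradf (x + t *\<^sub>R s))) (at (x + t *\<^sub>R s))"
      using grad[of "x + t *\<^sub>R s"] by (simp add: gderiv_def)
    have 3: "((\<lambda>t. f (x + t *\<^sub>R s)) has_derivative (\<lambda>h. (h *\<^sub>R s) \<bullet> gradf (x + t *\<^sub>R s))) (at t)"
      by (rule has_derivative_compose[OF 1 2])
    show ?thesis unfolding has_field_derivative_def
      by (rule has_derivative_eq_rhs[OF 3]) (auto simp: inner_commute)
  qed
  have d23: "((\<lambda>t. t * (g \<bullet> s) + L / 2 * (t * t) * (s \<bullet> s)) has_real_derivative (g \<bullet> s + L / 2 * (2 * t) * (s \<bullet> s))) (at t)" for t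
    by (auto intro!: derivative_eq_intros simp: algebra_simps)
  have dpsi: "(\<psi> has_real_derivative (gradf (x + t *\<^sub>R s) \<bullet> s - (g \<bullet> s + L / 2 * (2 * t) * (s \<bullet> s)))) (at t)" for t
    unfolding \<psi>_def by (rule DERIV_diff[OF dphi d23])
  have nonpos: "gradf (x + t *\<^sub>R s) \<bullet> s - (g \<bullet> s + L / 2 * (2 * t) * (s \<bullet> s)) \<le> 0" if "0 < t" "t < 1" for t
  proof -
    define d where "d = gradf (x + t *\<^sub>R s) - g"
    have bts: "bmask blk S (t *\<^sub>R s) = t *\<^sub>R s" using sS by (simp add: bmask_scaleR)
    have "gradf (x + t *\<^sub>R s) \<bullet> s - g \<bullet> s = d \<bullet> s" by (simp add: d_def inner_diff_left)
    also have "\<dots> = bmask blk S d \<bullet> s" by (metis inner_bmask_left sS)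
    also have "\<dots> \<le> norm (bmask blk S d) * norm s" by (rule norm_cauchy_schwarz)
    also have "\<dots> \<le> (L * norm (t *\<^sub>R s)) * norm s"
      using A2[of "t *\<^sub>R s"] unfolding bts d_def g_def by (intro mult_right_mono) auto
    also have "\<dots> = L * t * (s \<bullet> s)" using that by (simp add: dot_square_norm power2_eq_square)
    finally show ?thesis by simp
  qed
  have cont: "continuous_on {0..1} \<psi>"
    using dpsi by (meson DERIV_isCont continuous_at_imp_continuous_on)
  have "\<psi> 1 \<le> \<psi> 0"
  proof (rule DERIV_nonpos_imp_decreasing_open[of 0 1 \<psi>])
    fix t :: real assume "0 < t" "t < 1"
    then show "\<exists>y. (\<psi> has_real_derivative y) (at t) \<and> y \<le> 0"
      using dpsi[of t] nonpos[of t] by blast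
  qed (use cont in auto)
  then show ?thesis by (simp add: \<psi>_def g_def)
qed

lemma rcd_step_qv: "rcd_step blk a L gradf (i, j) x = x + (- (1 / L i j)) *\<^sub>R qv blk a {i,j} (gradf x)"
  unfolding rcd_step_def Let_def qv_def fst_conv snd_conv bm_av[of blk "{i,j}" a "gradf x"]
  by simp

lemma feas_step: "a \<bullet> rcd_step blk a L gradf ij x = a \<bullet> x"
  by (cases ij) (simp add: rcd_step_qv inner_add_right inner_diff_right qv_a)

lemma step_decrease:
  fixes f :: "real^'n::finite \<Rightarrow> real"
  assumes grad: "\<And>x. GDERIV f x :> gradf x"
    and A2: "\<And>x s. norm (bmask blk {i,j} (gradf (x + bmask blk {i,j} s) - gradf x)) \<le> L i j * norm (bmask blk {i,j} s)"
    and Lpos: "L i j > 0"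
  shows "f (rcd_step blk a L gradf (i, j) x) \<le> f x - 1 / (2 * L i j) * (gradf x \<bullet> qv blk a {i,j} (gradf x))"
proof -
  define q where "q = qv blk a {i,j} (gradf x)"
  define s where "s = (- (1 / L i j)) *\<^sub>R q"
  have sS: "bmask blk {i,j} s = s"
    by (simp add: s_def q_def qv_def bmask_scaleR bmask_diff)
  have "f (x + s) \<le> f x + gradf x \<bullet> s + L i j / 2 * (s \<bullet> s)"
    by (rule descent[OF grad A2 sS])
  also have "gradf x \<bullet> s = - (1 / L i j) * (gradf x \<bullet> q)" by (simp add: s_def)
  also have "s \<bullet> s = (1 / L i j) * (1 / L i j) * (gradf x \<bullet> q)"
    by (simp add: s_def q_def qv_quad[symmetric])
  finally have "f (x + s) \<le> f x - (1 / L i j) * (gradf x \<bullet> q) + L i j / 2 * ((1 / L i j) * (1 / L i j) * (gradf x \<bullet> q))"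
    by simp
  also have "\<dots> = f x - 1 / (2 * L i j) * (gradf x \<bullet> q)" using Lpos by (simp add: field_simps)
  finally show ?thesis by (simp add: rcd_step_qv s_def q_def)
qed

lemma exp_sum: "finite (set_pmf M) \<Longrightarrow> measure_pmf.expectation M h = (\<Sum>a\<in>set_pmf M. h a * pmf M a)"
  by (rule integral_measure_pmf_real) auto

lemma pair_exp:
  fixes F :: "'a \<times> 'c \<Rightarrow> real"
  assumes fa: "finite (set_pmf A)" and fb: "finite (set_pmf B)"
  shows "measure_pmf.expectation (pair_pmf A B) F
       = measure_pmf.expectation B (\<lambda>b. measure_pmf.expectation A (\<lambda>a. F (a, b)))"
proof -
  have fp: "finite (set_pmf (pair_pmf A B))" using fa fb by (simp add: set_pair_pmf)
  have "measure_pmf.expectation (pair_pmf A B) F = (\<Sum>z\<in>set_pmf A \<times> set_pmf B. F z * pmf (pair_pmf A B) z)"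
    using exp_sum[OF fp] by (simp add: set_pair_pmf)
  also have "\<dots> = (\<Sum>a\<in>set_pmf A. \<Sum>b\<in>set_pmf B. F (a, b) * (pmf A a * pmf B b))"
    by (subst sum.cartesian_product) (auto intro!: sum.cong simp: pmf_pair)
  also have "\<dots> = (\<Sum>b\<in>set_pmf B. \<Sum>a\<in>set_pmf A. F (a, b) * (pmf A a * pmf B b))"
    by (rule sum.swap)
  also have "\<dots> = (\<Sum>b\<in>set_pmf B. (\<Sum>a\<in>set_pmf A. F (a, b) * pmf A a) * pmf B b)"
    by (simp add: sum_distrib_right mult.assoc)
  also have "\<dots> = measure_pmf.expectation B (\<lambda>b. measure_pmf.expectation A (\<lambda>a. F (a, b)))"
    using exp_sum[OF fb] exp_sum[OF fa] by simp
  finally show ?thesis .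
qed

lemma finite_D: "finite (set_pmf (Pi_pmf {..<(l::nat)} dflt (\<lambda>_. (P :: ('c::finite) pmf))))"
  by (subst set_Pi_pmf) (auto intro!: finite_PiE_dflt)

lemma exp_Suc:
  fixes P :: "('c::finite) pmf" and H :: "(nat \<Rightarrow> 'c) \<Rightarrow> real"
  shows "measure_pmf.expectation (Pi_pmf {..<Suc l} d (\<lambda>_. P)) H
       = measure_pmf.expectation (Pi_pmf {..<l} d (\<lambda>_. P))
           (\<lambda>w. measure_pmf.expectation P (\<lambda>y. H (fun_upd w l y)))"
proof -
  have "Pi_pmf {..<Suc l} d (\<lambda>_. P) = map_pmf (\<lambda>(y, f). f(l := y)) (pair_pmf P (Pi_pmf {..<l} d (\<lambda>_. P)))"
    unfolding lessThan_Suc by (rule Pi_pmf_insert) auto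
  then have "measure_pmf.expectation (Pi_pmf {..<Suc l} d (\<lambda>_. P)) H
      = measure_pmf.expectation (pair_pmf P (Pi_pmf {..<l} d (\<lambda>_. P))) (\<lambda>z. H (case z of (y, f) \<Rightarrow> f(l := y)))"
    by simp
  also have "\<dots> = measure_pmf.expectation (Pi_pmf {..<l} d (\<lambda>_. P))
           (\<lambda>w. measure_pmf.expectation P (\<lambda>y. H (fun_upd w l y)))"
    by (subst pair_exp) (simp_all add: finite_D)
  finally show ?thesis .
qed

lemma iter_upd: "m \<le> l \<Longrightarrow> rcd_iter blk a L gradf x0 (fun_upd \<omega> l y) m = rcd_iter blk a L gradf x0 \<omega> m"
  by (induction m) auto

lemma iter_upd_Suc: "rcd_iter blk a L gradf x0 (fun_upd \<omega> l y) (Suc l) = rcd_step blk a L gradf y (rcd_iter blk a L gradf x0 \<omega> l)"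
  by (simp add: iter_upd)

lemma telescope:
  fixes F G :: "nat \<Rightarrow> real"
  assumes "\<And>l. F (Suc l) \<le> F l - c * G l"
  shows "F (Suc k) \<le> F 0 - c * (\<Sum>l\<in>{0..k}. G l)"
proof (induction k)
  case 0 then show ?case using assms[of 0] by simp
next
  case (Suc k)
  have "F (Suc (Suc k)) \<le> F (Suc k) - c * G (Suc k)" by (rule assms)
  also have "\<dots> \<le> F 0 - c * (\<Sum>l\<in>{0..k}. G l) - c * G (Suc k)" using Suc by simp
  finally show ?case by (simp add: algebra_simps)
qed

lemma min_bound:
  fixes G :: "nat \<Rightarrow> real"
  assumes c: "c > 0" and sumb: "c / 2 * (\<Sum>l\<in>{0..k}. G l) \<le> B"
  shows "Min (G ` {0..k}) \<le> 2 * B / (c * (k + 1))"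
proof -
  define m where "m = Min (G ` {0..k})"
  have "m \<le> G l" if "l \<in> {0..k}" for l using that by (simp add: m_def)
  then have "(\<Sum>l\<in>{0..k}. m) \<le> (\<Sum>l\<in>{0..k}. G l)" by (rule sum_mono)
  then have "(real k + 1) * m \<le> (\<Sum>l\<in>{0..k}. G l)" by (simp add: add.commute[of "real k" 1])
  then have "c / 2 * ((real k + 1) * m) \<le> B" using sumb c
    by (meson mult_left_mono order_trans less_eq_real_def half_gt_zero)
  then have "m * (c * (real k + 1)) \<le> 2 * B" by (simp add: field_simps)
  then have "m \<le> 2 * B / (c * (real k + 1))" using c by (simp add: pos_le_divide_eq add_pos_pos)
  then show ?thesis by (simp add: m_def add.commute[of "real k" 1])
qed

lemma exists_other: "2 \<le> CARD('c::finite) \<Longrightarrow> \<exists>j::'c. j \<noteq> i"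
proof (rule ccontr)
  assume "2 \<le> CARD('c)" "\<not> (\<exists>j::'c. j \<noteq> i)"
  then have "(UNIV :: 'c set) = {i}" by auto
  then have "CARD('c) = card {i}" by (rule arg_cong[where f=card])
  then have "CARD('c) = 1" by simp
  with \<open>2 \<le> CARD('c)\<close> show False by simp
qed

lemma exp_mono_fin:
  assumes "finite (set_pmf M)" "\<And>x. x \<in> set_pmf M \<Longrightarrow> h x \<le> k x"
  shows "measure_pmf.expectation M h \<le> measure_pmf.expectation M (k :: _ \<Rightarrow> real)"
  unfolding exp_sum[OF assms(1)] by (intro sum_mono mult_right_mono) (auto simp: assms(2))

lemma exp_lin:
  assumes "finite (set_pmf M)"
  shows "measure_pmf.expectation M (\<lambda>x. h x - r * k x) = measure_pmf.expectation M h - r * measure_pmf.expectation M (k :: _ \<Rightarrow> real)"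
  unfolding exp_sum[OF assms(1)] by (simp add: sum_subtractf sum_distrib_left algebra_simps)

lemma exp_const_le:
  assumes "finite (set_pmf M)" "\<And>x. x \<in> set_pmf M \<Longrightarrow> c \<le> h x"
  shows "c \<le> measure_pmf.expectation M (h :: _ \<Rightarrow> real)"
proof -
  have "c = (\<Sum>x\<in>set_pmf M. c * pmf M x)"
    using sum_pmf_eq_1[OF assms(1), of M] by (simp add: sum_distrib_left[symmetric])
  also have "\<dots> \<le> (\<Sum>x\<in>set_pmf M. h x * pmf M x)"
    by (intro sum_mono mult_right_mono) (auto simp: assms(2))
  finally show ?thesis unfolding exp_sum[OF assms(1)] .
qed

theorem theorem5:
  fixes blk :: "'n::finite \<Rightarrow> 'b::finite"
    and a x0 :: "real^'n" and b :: real
    and f :: "real^'n \<Rightarrow> real" and gradf :: "real^'n \<Rightarrow> real^'n"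
    and L :: "'b \<Rightarrow> 'b \<Rightarrow> real"
    and P :: "('b \<times> 'b) pmf"
    and k :: nat
  assumes blocks: "CARD('b) \<ge> 2" "surj blk"
    and a_nz: "a \<noteq> 0"
    and grad: "\<And>x. GDERIV f x :> gradf x"
    and L_sym: "\<And>i j. i \<noteq> j \<Longrightarrow> L i j = L j i"
    and L_pos: "\<And>i j. i \<noteq> j \<Longrightarrow> L i j > 0"
    and A2: "\<And>i j x s. i \<noteq> j \<Longrightarrow>
              norm (bmask blk {i, j} (gradf (x + bmask blk {i, j} s) - gradf x))
                \<le> L i j * norm (bmask blk {i, j} s)"
    and aij_nz: "\<And>i j. i \<noteq> j \<Longrightarrow> bmask blk {i, j} a \<noteq> 0"
    and fbdd: "bdd_below (f ` {x. a \<bullet> x = b})"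
    and p_sym: "\<And>i j. i \<noteq> j \<Longrightarrow> pmf P (i, j) = pmf P (j, i)"
    and p_pos: "\<And>i j. i \<noteq> j \<Longrightarrow> pmf P (i, j) > 0"
    and p_diag: "\<And>i. pmf P (i, i) = 0"
    and nu_pos: "nu2 (\<Sum>(i, j)\<in>{(i, j). i \<noteq> j}. (pmf P (i, j) / L i j) *\<^sub>R Qij blk a i j) > 0"
    and feas: "a \<bullet> x0 = b"
  shows "Min ((\<lambda>l. measure_pmf.expectation (Pi_pmf {..<l} undefined (\<lambda>_. P))
                     (\<lambda>\<omega>. (M3 a gradf (rcd_iter blk a L gradf x0 \<omega> l))\<^sup>2)) ` {0..k})
         \<le> 2 * (f x0 - Inf (f ` {x. a \<bullet> x = b}))
           / (nu2 (\<Sum>(i, j)\<in>{(i, j). i \<noteq> j}. (pmf P (i, j) / L i j) *\<^sub>R Qij blk a i j) * (k + 1))"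
proof -
  define Off where "Off = {(i::'b, j). i \<noteq> j}"
  define c where "c i j = pmf P (i, j) / L i j" for i j
  define Q where "Q = (\<Sum>(i, j)\<in>{(i::'b, j). i \<noteq> j}. (pmf P (i, j) / L i j) *\<^sub>R Qij blk a i j)"
  define nu where "nu = nu2 Q"
  define fs where "fs = Inf (f ` {x. a \<bullet> x = b})"
  have nupos: "nu > 0" using nu_pos by (simp add: nu_def Q_def)
  have Qv: "Q *v v = (\<Sum>(i, j)\<in>Off. c i j *\<^sub>R qv blk a {i,j} v)" for v
    unfolding Q_def Off_def c_def by (rule Q_mult) simp
  have inQ: "u \<bullet> (Q *v v) = (\<Sum>(i, j)\<in>Off. c i j * (u \<bullet> qv blk a {i,j} v))" for u v
    unfolding Qv inner_sum_right by (rule sum.cong) auto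
  have c_pos: "c i j > 0" if "(i, j) \<in> Off" for i j
    using that p_pos L_pos by (simp add: Off_def c_def)
  have sym: "u \<bullet> (Q *v v) = v \<bullet> (Q *v u)" for u v
    unfolding inQ by (rule sum.cong) (auto simp: qv_sym)
  have psd: "v \<bullet> (Q *v v) \<ge> 0" for v
    unfolding inQ
  proof (rule sum_nonneg)
    fix y assume y: "y \<in> Off"
    then obtain i j where ij: "y = (i, j)" "(i, j) \<in> Off" by (cases y) auto
    show "0 \<le> (case y of (i, j) \<Rightarrow> c i j * (v \<bullet> qv blk a {i,j} v))"
      using mult_nonneg_nonneg[OF less_imp_le[OF c_pos[OF ij(2)]] qv_nonneg[of v blk a "{i,j}"]]
      by (simp add: ij(1))
  qed
  have Qa: "Q *v a = 0" unfolding Qv by (simp add: qv_of_a)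
  have pd: "v = 0" if av: "a \<bullet> v = 0" and vq: "v \<bullet> (Q *v v) = 0" for v
  proof -
    have "\<forall>y\<in>Off. (case y of (i, j) \<Rightarrow> c i j * (v \<bullet> qv blk a {i,j} v)) = 0"
    proof -
      have nn: "\<forall>y\<in>Off. 0 \<le> (case y of (i, j) \<Rightarrow> c i j * (v \<bullet> qv blk a {i,j} v))"
      proof
        fix y assume y: "y \<in> Off"
        then obtain i j where ij: "y = (i, j)" "(i, j) \<in> Off" by (cases y) auto
        show "0 \<le> (case y of (i, j) \<Rightarrow> c i j * (v \<bullet> qv blk a {i,j} v))"
          using mult_nonneg_nonneg[OF less_imp_le[OF c_pos[OF ij(2)]] qv_nonneg[of v blk a "{i,j}"]]
          by (simp add: ij(1))
      qed
      have "(\<Sum>(i, j)\<in>Off. c i j * (v \<bullet> qv blk a {i,j} v)) = 0" using vq unfolding inQ .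
      then show ?thesis using sum_nonneg_eq_0_iff[of Off, OF _ nn[rule_format]] by simp
    qed
    then have z: "v \<bullet> qv blk a {i,j} v = 0" if "i \<noteq> j" for i j
      using c_pos[of i j] that by (force simp: Off_def)
    have minor: "v $ k * a $ l = v $ l * a $ k" for k l
    proof -
      obtain j where j: "j \<noteq> blk k" "blk l \<noteq> blk k \<longrightarrow> j = blk l"
        using exists_other[OF blocks(1), of "blk k"] by (cases "blk l = blk k") auto
      define \<kappa> where "\<kappa> = (bmask blk {blk k, j} a \<bullet> v) / (bmask blk {blk k, j} a \<bullet> bmask blk {blk k, j} a)"
      have e: "bmask blk {blk k, j} v = \<kappa> *\<^sub>R bmask blk {blk k, j} a"
        unfolding \<kappa>_def by (rule qv_zero_imp) (rule z, use j in auto)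
      have "blk l \<in> {blk k, j}" using j by auto
      then have "v $ k = \<kappa> * a $ k" "v $ l = \<kappa> * a $ l"
        using arg_cong[OF e, of "\<lambda>u. u $ k"] arg_cong[OF e, of "\<lambda>u. u $ l"] by auto
      then show ?thesis by simp
    qed
    obtain l0 where l0: "a $ l0 \<noteq> 0" using a_nz by (auto simp: vec_eq_iff)
    define \<kappa> where "\<kappa> = v $ l0 / a $ l0"
    have vk: "v = \<kappa> *\<^sub>R a"
    proof -
      have "v $ k = \<kappa> * a $ k" for k using minor[of k l0] l0 by (simp add: \<kappa>_def field_simps)
      then show ?thesis by (simp add: vec_eq_iff)
    qed
    have "\<kappa> * (a \<bullet> a) = 0" using av by (simp add: vk)
    then have "\<kappa> = 0" using a_nz by simp
    then show ?thesis by (simp add: vk)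
  qed
  have cardn: "2 \<le> CARD('n)"
  proof -
    have "CARD('b) = card (range blk)" using blocks(2) by simp
    also have "\<dots> \<le> CARD('n)" by (rule card_image_le) simp
    finally show ?thesis using blocks(1) by simp
  qed
  obtain k0 where k0: "a $ k0 \<noteq> 0" using a_nz by (auto simp: vec_eq_iff)
  obtain l1 where l1: "l1 \<noteq> k0" using exists_other[OF cardn, of k0] by auto
  define e where "e = (a $ l1) *\<^sub>R axis k0 (1::real) - (a $ k0) *\<^sub>R axis l1 1"
  have ae: "a \<bullet> e = 0" by (simp add: e_def inner_diff_right inner_axis)
  have enz: "e \<noteq> 0"
  proof
    assume "e = 0"
    then have "e $ l1 = 0" by simp
    then show False using l1 k0 by (simp add: e_def axis_def)
  qed
  have spec: "nu * (v \<bullet> v) \<le> v \<bullet> (Q *v v)" if "a \<bullet> v = 0" for v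
    unfolding nu_def by (rule spectral_bound[OF sym psd Qa a_nz pd ae enz that])
  have gbound: "nu * (M3 a gradf x)\<^sup>2 \<le> gradf x \<bullet> (Q *v gradf x)" for x
  proof -
    define g where "g = gradf x"
    define \<kappa> where "\<kappa> = (a \<bullet> g) / (a \<bullet> a)"
    define gp where "gp = g - \<kappa> *\<^sub>R a"
    have gp: "proj_perp a g = gp" by (simp add: proj_perp_def gp_def \<kappa>_def)
    have agp: "a \<bullet> gp = 0" using a_nz by (simp add: gp_def \<kappa>_def inner_diff_right)
    have Qg: "Q *v g = Q *v gp"
    proof -
      have "g = gp + \<kappa> *\<^sub>R a" by (simp add: gp_def)
      then have "Q *v g = Q *v gp + \<kappa> *\<^sub>R (Q *v a)"
        by (metis matrix_vector_right_distrib matrix_vector_mult_scaleR)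
      then show ?thesis using Qa by simp
    qed
    have "g \<bullet> (Q *v g) = gp \<bullet> (Q *v gp)"
    proof -
      have "g \<bullet> (Q *v g) = gp \<bullet> (Q *v g)" using sym[of g gp] Qg by simp
      also have "\<dots> = gp \<bullet> (Q *v gp)" by (simp add: Qg)
      finally show ?thesis .
    qed
    moreover have "nu * (gp \<bullet> gp) \<le> gp \<bullet> (Q *v gp)" by (rule spec[OF agp])
    moreover have "(M3 a gradf x)\<^sup>2 = gp \<bullet> gp" by (simp add: M3_def gp[unfolded g_def] dot_square_norm)
    ultimately show ?thesis by (simp add: g_def)
  qed
  have E1: "measure_pmf.expectation P h = (\<Sum>y\<in>Off. h y * pmf P y)" for h :: "'b \<times> 'b \<Rightarrow> real"
  proof -
    have "measure_pmf.expectation P h = (\<Sum>y\<in>UNIV. h y * pmf P y)" by (rule integral_measure_pmf_real) auto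
    also have "\<dots> = (\<Sum>y\<in>Off. h y * pmf P y)"
    proof (rule sum.mono_neutral_right)
      show "\<forall>y\<in>UNIV - Off. h y * pmf P y = 0"
      proof
        fix y assume "y \<in> UNIV - Off"
        then obtain i where "y = (i, i)" by (cases y) (auto simp: Off_def)
        then show "h y * pmf P y = 0" by (simp add: p_diag)
      qed
    qed auto
    finally show ?thesis .
  qed
  have psum: "(\<Sum>y\<in>Off. pmf P y) = 1"
    using E1[of "\<lambda>_. 1"] by simp
  have Estep: "measure_pmf.expectation P (\<lambda>y. f (rcd_step blk a L gradf y x))
       \<le> f x - 1 / 2 * (gradf x \<bullet> (Q *v gradf x))" for x
  proof -
    define g where "g = gradf x"
    have trm: "f (rcd_step blk a L gradf y x) * pmf P y
        \<le> f x * pmf P y - 1 / 2 * (c (fst y) (snd y) * (g \<bullet> qv blk a {fst y, snd y} g))"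
      if "y \<in> Off" for y
    proof -
      have ne: "fst y \<noteq> snd y" using that unfolding Off_def by (simp add: case_prod_beta)
      obtain i j where y: "y = (i, j)" "i \<noteq> j" using ne by (metis prod.collapse)
      have Lp: "L i j > 0" using L_pos[OF y(2)] .
      have "f (rcd_step blk a L gradf (i, j) x) \<le> f x - 1 / (2 * L i j) * (g \<bullet> qv blk a {i,j} g)"
        unfolding g_def by (rule step_decrease[where f=f and gradf=gradf and blk=blk and i=i and j=j and L=L, OF grad A2[OF y(2)] Lp])
      then have "f (rcd_step blk a L gradf (i, j) x) * pmf P (i, j)
          \<le> (f x - 1 / (2 * L i j) * (g \<bullet> qv blk a {i,j} g)) * pmf P (i, j)"
        by (rule mult_right_mono) simp
      also have "\<dots> = f x * pmf P (i, j) - 1 / 2 * (c i j * (g \<bullet> qv blk a {i,j} g))"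
        using Lp by (simp add: c_def field_simps)
      finally show ?thesis by (simp add: y)
    qed
    have "measure_pmf.expectation P (\<lambda>y. f (rcd_step blk a L gradf y x))
        = (\<Sum>y\<in>Off. f (rcd_step blk a L gradf y x) * pmf P y)" by (rule E1)
    also have "\<dots> \<le> (\<Sum>y\<in>Off. f x * pmf P y - 1 / 2 * (c (fst y) (snd y) * (g \<bullet> qv blk a {fst y, snd y} g)))"
      by (rule sum_mono) (rule trm)
    also have "\<dots> = f x * (\<Sum>y\<in>Off. pmf P y) - 1 / 2 * (\<Sum>y\<in>Off. c (fst y) (snd y) * (g \<bullet> qv blk a {fst y, snd y} g))"
      by (simp add: sum_subtractf sum_distrib_left)
    also have "(\<Sum>y\<in>Off. c (fst y) (snd y) * (g \<bullet> qv blk a {fst y, snd y} g)) = g \<bullet> (Q *v g)"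
      unfolding inQ by (simp add: case_prod_beta)
    finally show ?thesis by (simp add: psum g_def)
  qed
  define X where "X \<omega> l = rcd_iter blk a L gradf x0 \<omega> l" for \<omega> and l :: nat
  define D where "D l = Pi_pmf {..<l} undefined (\<lambda>_. P)" for l :: nat
  define F where "F l = measure_pmf.expectation (D l) (\<lambda>\<omega>. f (X \<omega> l))" for l :: nat
  define G where "G l = measure_pmf.expectation (D l) (\<lambda>\<omega>. (M3 a gradf (X \<omega> l))\<^sup>2)" for l :: nat
  have finD: "finite (set_pmf (D l))" for l unfolding D_def by (rule finite_D)
  have Xfeas: "a \<bullet> X \<omega> m = b" for \<omega> m
    unfolding X_def by (induction m) (simp_all add: feas feas_step)
  have Fstep: "F (Suc l) \<le> F l - nu / 2 * G l" for l
  proof -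
    have "F (Suc l) = measure_pmf.expectation (D l)
          (\<lambda>w. measure_pmf.expectation P (\<lambda>y. f (X (fun_upd w l y) (Suc l))))"
      unfolding F_def D_def by (rule exp_Suc)
    also have "\<dots> = measure_pmf.expectation (D l)
          (\<lambda>w. measure_pmf.expectation P (\<lambda>y. f (rcd_step blk a L gradf y (X w l))))"
      by (simp add: X_def iter_upd)
    also have "\<dots> \<le> measure_pmf.expectation (D l) (\<lambda>w. f (X w l) - nu / 2 * (M3 a gradf (X w l))\<^sup>2)"
    proof (rule exp_mono_fin[OF finD])
      fix w
      have "measure_pmf.expectation P (\<lambda>y. f (rcd_step blk a L gradf y (X w l)))
          \<le> f (X w l) - 1 / 2 * (gradf (X w l) \<bullet> (Q *v gradf (X w l)))" by (rule Estep)
      also have "\<dots> \<le> f (X w l) - nu / 2 * (M3 a gradf (X w l))\<^sup>2"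
        using gbound[of "X w l"] by simp
      finally show "measure_pmf.expectation P (\<lambda>y. f (rcd_step blk a L gradf y (X w l)))
          \<le> f (X w l) - nu / 2 * (M3 a gradf (X w l))\<^sup>2" .
    qed
    also have "\<dots> = F l - nu / 2 * G l"
      unfolding F_def G_def by (rule exp_lin[OF finD])
    finally show ?thesis .
  qed
  have F0: "F 0 = f x0"
    by (simp add: F_def D_def X_def exp_sum)
  have Flow: "fs \<le> F (Suc k)"
    unfolding F_def
  proof (rule exp_const_le[OF finD])
    fix w
    have "f (X w (Suc k)) \<in> f ` {x. a \<bullet> x = b}" using Xfeas by blast
    then show "fs \<le> f (X w (Suc k))" unfolding fs_def by (rule cInf_lower[OF _ fbdd])
  qed
  have "F (Suc k) \<le> F 0 - nu / 2 * (\<Sum>l\<in>{0..k}. G l)"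
    by (rule telescope) (rule Fstep)
  then have "nu / 2 * (\<Sum>l\<in>{0..k}. G l) \<le> f x0 - fs" using F0 Flow by linarith
  then have "Min (G ` {0..k}) \<le> 2 * (f x0 - fs) / (nu * (k + 1))"
    by (rule min_bound[OF nupos])
  then show ?thesis
    unfolding G_def D_def X_def fs_def nu_def Q_def .
qed

end
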